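(* Let $t_0\in\mathbb{R}$, let $A,\Delta,K:[t_0,\infty)\to\mathbb{R}^{n\times n}$ be piecewise continuous, $B\in\mathbb{R}^{n\times n}$ constant, and $\omega:\mathbb{R}^n\times[t_0,\infty)\to\mathbb{R}^n$ piecewise continuous (no assumption $\omega(0,t)=0$ is made). Consider \[ \dot x=\big[A(t)+\Delta(t)\big]x+BK(t)x+\omega(x,t),\qquad t\ge t_0 . \] Suppose that for some vector norm $\|\cdot\|$ on $\mathbb{R}^n$ with associated logarithmic norm $\mu$: (A1) $\int_{t_0}^\infty|\mu[\Delta(s)]|\,ds<\infty$; (A2) there is $T\ge t_0$ such that $\mu[A(t)+BK(t)]<0$ for all $t\ge T$; (A3) there is a piecewise continuous function $\tilde\omega:[t_0,\infty)\to\mathbb{R}^n$ with $\|\omega(x,t)\|\le\|\tilde\omega(t)\|$ for all $x\in\mathbb{R}^n$, $t\ge t_0$, and \[ \lim_{t\to\infty}\frac{\|\tilde\omega(t)\|}{\mu[A(t)+BK(t)]}=0; \] (A4) $\int_{t_0}^t\mu[A(s)+BK(s)]\,ds\to-\infty$ as $t\to\infty$. Then every solution $x:[t_0,\infty)\to\mathbb{R}^n$ of this system satisfies $x(t)\to0$ as $t\to\infty$.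
   Context: For a vector norm $\|\cdot\|$ on $\mathbb{R}^n$, matrices are normed by the induced operator norm $\|\mathcal{A}\|=\max_{\|x\|=1}\|\mathcal{A}x\|$. The logarithmic norm of $\mathcal{A}\in\mathbb{R}^{n\times n}$ is $\mu[\mathcal{A}]=\lim_{h\to0^+}\frac{\|I_n+h\mathcal{A}\|-1}{h}$, where $I_n$ is the identity matrix; it can be negative. *)

theory Defs
  imports "HOL-Analysis.Analysis"
begin

definition is_vector_norm :: "(real^'n \<Rightarrow> real) \<Rightarrow> bool" where
  "is_vector_norm N \<longleftrightarrow>
     (\<forall>x. 0 \<le> N x) \<and> (\<forall>x. N x = 0 \<longleftrightarrow> x = 0) \<and>
     (\<forall>c x. N (c *\<^sub>R x) = \<bar>c\<bar> * N x) \<and> (\<forall>x y. N (x + y) \<le> N x + N y)"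

definition induced_norm :: "(real^'n \<Rightarrow> real) \<Rightarrow> real^'n^'n \<Rightarrow> real" where
  "induced_norm N M = Sup {N (M *v x) | x. N x = 1}"

definition log_norm :: "(real^'n \<Rightarrow> real) \<Rightarrow> real^'n^'n \<Rightarrow> real" where
  "log_norm N M = Lim (at_right 0) (\<lambda>h. (induced_norm N (mat 1 + h *\<^sub>R M) - 1) / h)"

definition piecewise_continuous_from :: "real \<Rightarrow> (real \<Rightarrow> 'a::topological_space) \<Rightarrow> bool" where
  "piecewise_continuous_from t0 f \<longleftrightarrow>
     (\<forall>b\<ge>t0. \<exists>S. finite S \<and> continuous_on ({t0..b} - S) f \<and>
        (\<forall>s\<in>S. (\<exists>l. (f \<longlongrightarrow> l) (at_right s)) \<and> (t0 < s \<longrightarrow> (\<exists>l. (f \<longlongrightarrow> l) (at_left s)))))"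

definition piecewise_continuous_state_time ::
    "real \<Rightarrow> ('b::topological_space \<Rightarrow> real \<Rightarrow> 'a::topological_space) \<Rightarrow> bool" where
  "piecewise_continuous_state_time t0 w \<longleftrightarrow>
     (\<forall>b\<ge>t0. \<exists>S. finite S \<and> continuous_on (UNIV \<times> ({t0..b} - S)) (\<lambda>(x, t). w x t)) \<and>
     (\<forall>x. piecewise_continuous_from t0 (\<lambda>t. w x t))"

text \<open>Solution on [t0, infinity) of x' = F (x, t), in the (Caratheodory) integral sense:
  x continuous and x t = x t0 + integral of F (x s, s) over [t0,t].\<close>
definition is_solution_from ::
    "real \<Rightarrow> (real^'n \<Rightarrow> real \<Rightarrow> real^'n) \<Rightarrow> (real \<Rightarrow> real^'n) \<Rightarrow> bool" where
  "is_solution_from t0 F x \<longleftrightarrow>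
     continuous_on {t0..} x \<and>
     (\<forall>t\<ge>t0. ((\<lambda>s. F (x s) s) has_integral (x t - x t0)) {t0..t})"

end

theory Submission
  imports Defs
begin


lemma vnD:
  assumes "is_vector_norm N"
  shows "0 \<le> N x" "N x = 0 \<longleftrightarrow> x = 0" "N (c *\<^sub>R x) = \<bar>c\<bar> * N x" "N (x + y) \<le> N x + N y"
  using assms unfolding is_vector_norm_def by auto

lemma vn_minus: assumes "is_vector_norm N" shows "N (- x) = N x"
  using vnD(3)[OF assms, of "-1" x] by simp

lemma vn_diff: assumes "is_vector_norm N" shows "N x - N y \<le> N (x - y)"
  using vnD(4)[OF assms, of "x - y" y] by simp

lemma vn_sum: assumes "is_vector_norm N" shows "N (sum f S) \<le> (\<Sum>i\<in>S. N (f i))"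
proof (induction S rule: infinite_finite_induct)
  case (infinite A) then show ?case using vnD(2)[OF assms, of 0] by simp
next
  case empty then show ?case using vnD(2)[OF assms, of 0] by simp
next
  case (insert x F)
  then show ?case using vnD(4)[OF assms, of "f x" "sum f F"] by simp
qed

lemma vn_upper:
  assumes "is_vector_norm N"
  shows "\<exists>C>0. \<forall>x::real^'n. N x \<le> C * norm x"
proof -
  define C where "C = 1 + (\<Sum>i\<in>UNIV. N (axis i (1::real) :: real^'n))"
  have C0: "C > 0" unfolding C_def using vnD(1)[OF assms] by (simp add: add_pos_nonneg sum_nonneg)
  have "N x \<le> C * norm x" for x :: "real^'n"
  proof -
    have "x = (\<Sum>i\<in>UNIV. (x$i) *\<^sub>R axis i 1)"
      using basis_expansion[of x] by (simp add: scalar_mult_eq_scaleR)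
    then have "N x \<le> (\<Sum>i\<in>UNIV. N ((x$i) *\<^sub>R axis i 1))"
      by (metis vn_sum[OF assms])
    also have "\<dots> = (\<Sum>i\<in>UNIV. \<bar>x$i\<bar> * N (axis i 1))"
      using vnD(3)[OF assms] by simp
    also have "\<dots> \<le> (\<Sum>i\<in>UNIV. norm x * N (axis i 1))"
      by (intro sum_mono mult_right_mono) (auto simp: component_le_norm_cart vnD(1)[OF assms])
    also have "\<dots> \<le> C * norm x"
      unfolding C_def by (simp add: sum_distrib_left[symmetric] algebra_simps)
    finally show ?thesis .
  qed
  with C0 show ?thesis by blast
qed

lemma vn_lipschitz:
  assumes "is_vector_norm N" "\<forall>x::real^'n. N x \<le> C * norm x"
  shows "\<bar>N x - N y\<bar> \<le> C * norm (x - y)"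
proof -
  have "N x - N y \<le> N (x - y)" "N y - N x \<le> N (y - x)" using vn_diff[OF assms(1)] by auto
  moreover have "N (y - x) = N (x - y)" using vn_minus[OF assms(1), of "x - y"] by simp
  moreover have "N (x - y) \<le> C * norm (x - y)" using assms(2) by blast
  ultimately show ?thesis by linarith
qed

lemma vn_continuous:
  assumes "is_vector_norm N"
  shows "continuous_on UNIV (N :: real^'n \<Rightarrow> real)"
proof -
  obtain C where C: "C > 0" "\<forall>x::real^'n. N x \<le> C * norm x" using vn_upper[OF assms] by blast
  show ?thesis unfolding continuous_on_iff
  proof (intro ballI allI impI)
    fix x :: "real^'n" and e :: real assume "e > 0"
    show "\<exists>d>0. \<forall>x'\<in>UNIV. dist x' x < d \<longrightarrow> dist (N x') (N x) < e"
    proof (intro exI[of _ "e / C"] conjI ballI impI)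
      show "e / C > 0" using C \<open>e>0\<close> by simp
      fix x' assume "dist x' x < e / C"
      then have "C * norm (x' - x) < e" using C by (simp add: dist_norm field_simps)
      then show "dist (N x') (N x) < e" using vn_lipschitz[OF assms C(2), of x' x] by (simp add: dist_real_def)
    qed
  qed
qed

lemma vn_lower:
  assumes "is_vector_norm N"
  shows "\<exists>m>0. \<forall>x::real^'n. m * norm x \<le> N x"
proof -
  have cont: "continuous_on (sphere 0 1) (N :: real^'n \<Rightarrow> real)"
    using vn_continuous[OF assms] continuous_on_subset by blast
  have ne: "sphere (0::real^'n) 1 \<noteq> {}" by simp
  obtain y where y: "y \<in> sphere (0::real^'n) 1" "\<forall>z\<in>sphere 0 1. N y \<le> N z"
    using continuous_attains_inf[OF compact_sphere ne cont] by blast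
  have m0: "N y > 0" using y(1) vnD(1,2)[OF assms, of y] by fastforce
  have "N y * norm x \<le> N x" for x :: "real^'n"
  proof (cases "x = 0")
    case True then show ?thesis using vnD(2)[OF assms, of x] by simp
  next
    case False
    then have "(1/norm x) *\<^sub>R x \<in> sphere 0 1" by simp
    then have "N y \<le> N ((1/norm x) *\<^sub>R x)" using y(2) by blast
    also have "\<dots> = N x / norm x" using vnD(3)[OF assms] by simp
    finally show ?thesis using False by (simp add: field_simps)
  qed
  with m0 show ?thesis by blast
qed



lemma mat_norm_bound:
  fixes M :: "real^'n^'n"
  shows "norm (M *v x) \<le> (real CARD('n) * real CARD('n) * norm M) * norm x"
proof -
  have "norm (M *v x) \<le> onorm ((*v) M) * norm x" by (rule onorm) simp
  also have "onorm ((*v) M) \<le> (\<Sum>i\<in>UNIV. \<Sum>j\<in>UNIV. \<bar>M $ i $ j\<bar>)" by (rule onorm_le_matrix_component_sum)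
  also have "\<dots> \<le> (\<Sum>i\<in>(UNIV::'n set). \<Sum>j\<in>(UNIV::'n set). norm M)"
  proof (intro sum_mono)
    fix i j
    have "\<bar>M $ i $ j\<bar> \<le> norm (M $ i)" by (metis component_le_norm_cart real_norm_def)
    also have "\<dots> \<le> norm M" by (rule Finite_Cartesian_Product.norm_nth_le)
    finally show "\<bar>M $ i $ j\<bar> \<le> norm M" .
  qed
  also have "\<dots> = real CARD('n) * real CARD('n) * norm M" by simp
  finally show ?thesis by (simp add: mult_right_mono)
qed

lemma vn_matrix_bound:
  fixes N :: "real^'n \<Rightarrow> real"
  assumes "is_vector_norm N"
  shows "\<exists>K>0. \<forall>(M::real^'n^'n) x. N (M *v x) \<le> K * norm M * N x"
proof -
  obtain C where C: "C > 0" "\<forall>x::real^'n. N x \<le> C * norm x" using vn_upper[OF assms] by blast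
  obtain m where m: "m > 0" "\<forall>x::real^'n. m * norm x \<le> N x" using vn_lower[OF assms] by blast
  define K where "K = C * real CARD('n) * real CARD('n) / m"
  have "K > 0" using C m unfolding K_def by simp
  moreover have "N (M *v x) \<le> K * norm M * N x" for M :: "real^'n^'n" and x
  proof -
    have "N (M *v x) \<le> C * norm (M *v x)" using C by blast
    also have "\<dots> \<le> C * ((real CARD('n) * real CARD('n) * norm M) * norm x)"
      using C(1) mat_norm_bound by (intro mult_left_mono) auto
    also have "\<dots> \<le> C * ((real CARD('n) * real CARD('n) * norm M) * (N x / m))"
      using m C(1) by (intro mult_left_mono) (auto simp: field_simps)
    also have "\<dots> = K * norm M * N x" unfolding K_def by simp
    finally show ?thesis .
  qed
  ultimately show ?thesis by blast
qed

lemma vn_unit_exists: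
  fixes N :: "real^'n \<Rightarrow> real"
  assumes "is_vector_norm N"
  shows "\<exists>x::real^'n. N x = 1"
proof -
  obtain i :: 'n where True by blast
  let ?e = "axis i (1::real) :: real^'n"
  have "?e \<noteq> 0" by (simp add: axis_eq_0_iff)
  then have p: "N ?e > 0" using vnD(1,2)[OF assms, of ?e] by fastforce
  have "N ((1 / N ?e) *\<^sub>R ?e) = 1" using vnD(3)[OF assms] p by simp
  then show ?thesis by blast
qed

lemma induced_bdd:
  fixes N :: "real^'n \<Rightarrow> real" and M :: "real^'n^'n"
  assumes "is_vector_norm N"
  shows "bdd_above {N (M *v x) | x. N x = 1}"
proof -
  obtain K where K: "\<forall>(M::real^'n^'n) x. N (M *v x) \<le> K * norm M * N x" using vn_matrix_bound[OF assms] by blast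
  show ?thesis unfolding bdd_above_def
  proof (intro exI[of _ "K * norm M"] ballI)
    fix y assume "y \<in> {N (M *v x) |x. N x = 1}"
    then obtain x where "y = N (M *v x)" "N x = 1" by blast
    then show "y \<le> K * norm M" using K[rule_format, of M x] by simp
  qed
qed

lemma induced_le:
  fixes N :: "real^'n \<Rightarrow> real"
  assumes "is_vector_norm N"
  shows "N (M *v x) \<le> induced_norm N M * N x"
proof (cases "x = 0")
  case True then show ?thesis using vnD(2)[OF assms, of 0] by simp
next
  case False
  then have p: "N x > 0" using vnD(1,2)[OF assms, of x] by fastforce
  let ?y = "(1 / N x) *\<^sub>R x"
  have "N ?y = 1" using vnD(3)[OF assms] p by simp
  then have "N (M *v ?y) \<le> induced_norm N M"
    unfolding induced_norm_def by (intro cSup_upper induced_bdd[OF assms]) blast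
  moreover have "N (M *v ?y) = N (M *v x) / N x"
    using vnD(3)[OF assms] p by (simp add: matrix_vector_mult_scaleR)
  ultimately show ?thesis using p by (simp add: field_simps)
qed

lemma induced_least:
  fixes N :: "real^'n \<Rightarrow> real"
  assumes "is_vector_norm N" "\<And>x. N x = 1 \<Longrightarrow> N (M *v x) \<le> k"
  shows "induced_norm N M \<le> k"
  unfolding induced_norm_def using vn_unit_exists[OF assms(1)] assms(2)
  by (intro cSup_least) auto

lemma induced_ge:
  fixes N :: "real^'n \<Rightarrow> real"
  assumes "is_vector_norm N" "N x = 1"
  shows "N (M *v x) \<le> induced_norm N M"
  using induced_le[OF assms(1), of M x] assms(2) by simp

lemma induced_nonneg:
  fixes N :: "real^'n \<Rightarrow> real"
  assumes "is_vector_norm N" shows "0 \<le> induced_norm N M"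
  using vn_unit_exists[OF assms] induced_ge[OF assms] vnD(1)[OF assms] by (meson order_trans)

lemma induced_add:
  fixes N :: "real^'n \<Rightarrow> real"
  assumes "is_vector_norm N"
  shows "induced_norm N (M1 + M2) \<le> induced_norm N M1 + induced_norm N M2"
proof (rule induced_least[OF assms])
  fix x :: "real^'n" assume "N x = 1"
  have "N ((M1 + M2) *v x) \<le> N (M1 *v x) + N (M2 *v x)"
    using vnD(4)[OF assms] by (simp add: matrix_vector_mult_add_rdistrib)
  also have "\<dots> \<le> induced_norm N M1 + induced_norm N M2"
    using induced_ge[OF assms \<open>N x = 1\<close>] by (intro add_mono) auto
  finally show "N ((M1 + M2) *v x) \<le> induced_norm N M1 + induced_norm N M2" .
qed

lemma induced_scale:
  fixes N :: "real^'n \<Rightarrow> real"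
  assumes "is_vector_norm N"
  shows "induced_norm N (c *\<^sub>R M) \<le> \<bar>c\<bar> * induced_norm N M"
proof (rule induced_least[OF assms])
  fix x :: "real^'n" assume "N x = 1"
  have "N ((c *\<^sub>R M) *v x) = \<bar>c\<bar> * N (M *v x)"
    using vnD(3)[OF assms] by (simp add: scaleR_matrix_vector_assoc[symmetric])
  also have "\<dots> \<le> \<bar>c\<bar> * induced_norm N M"
    using induced_ge[OF assms \<open>N x = 1\<close>] by (intro mult_left_mono) auto
  finally show "N ((c *\<^sub>R M) *v x) \<le> \<bar>c\<bar> * induced_norm N M" .
qed

lemma induced_minus:
  fixes N :: "real^'n \<Rightarrow> real"
  assumes "is_vector_norm N"
  shows "induced_norm N (- M) = induced_norm N M"
  using induced_scale[OF assms, of "-1" M] induced_scale[OF assms, of "-1" "-M"] by simp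

lemma induced_id:
  fixes N :: "real^'n \<Rightarrow> real"
  assumes "is_vector_norm N"
  shows "induced_norm N (mat 1 :: real^'n^'n) = 1"
proof (rule antisym)
  show "induced_norm N (mat 1 :: real^'n^'n) \<le> 1" by (rule induced_least[OF assms]) simp
  obtain x :: "real^'n" where "N x = 1" using vn_unit_exists[OF assms] by blast
  then show "1 \<le> induced_norm N (mat 1 :: real^'n^'n)" using induced_ge[OF assms, of x "mat 1"] by simp
qed

lemma induced_norm_le:
  fixes N :: "real^'n \<Rightarrow> real"
  assumes "is_vector_norm N"
  shows "\<exists>K>0. \<forall>M::real^'n^'n. induced_norm N M \<le> K * norm M"
proof -
  obtain K where K: "K > 0" "\<forall>(M::real^'n^'n) x. N (M *v x) \<le> K * norm M * N x" using vn_matrix_bound[OF assms] by blast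
  have "induced_norm N M \<le> K * norm M" for M :: "real^'n^'n"
  proof (rule induced_least[OF assms])
    fix x :: "real^'n" assume "N x = 1"
    then show "N (M *v x) \<le> K * norm M" using K(2)[rule_format, of M x] by simp
  qed
  with K show ?thesis by blast
qed



definition fq :: "(real^'n \<Rightarrow> real) \<Rightarrow> real^'n^'n \<Rightarrow> real \<Rightarrow> real" where
  "fq N M h = (induced_norm N (mat 1 + h *\<^sub>R M) - 1) / h"

lemma induced_comb:
  fixes N :: "real^'n \<Rightarrow> real"
  assumes "is_vector_norm N"
  shows "induced_norm N (a *\<^sub>R X + b *\<^sub>R Y) \<le> \<bar>a\<bar> * induced_norm N X + \<bar>b\<bar> * induced_norm N Y"
  using induced_add[OF assms, of "a *\<^sub>R X" "b *\<^sub>R Y"] induced_scale[OF assms, of a X] induced_scale[OF assms, of b Y]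
  by linarith

lemma fq_mono:
  fixes N :: "real^'n \<Rightarrow> real"
  assumes "is_vector_norm N" "0 < h1" "h1 \<le> h2"
  shows "fq N M h1 \<le> fq N M h2"
proof -
  define \<theta> where "\<theta> = h1 / h2"
  have h2: "h2 > 0" using assms by simp
  have th: "0 < \<theta>" "\<theta> \<le> 1" using assms h2 unfolding \<theta>_def by auto
  have eq: "mat 1 + h1 *\<^sub>R M = (1 - \<theta>) *\<^sub>R (mat 1 :: real^'n^'n) + \<theta> *\<^sub>R (mat 1 + h2 *\<^sub>R M)"
    using h2 unfolding \<theta>_def by (simp add: algebra_simps)
  have "induced_norm N (mat 1 + h1 *\<^sub>R M) \<le> (1 - \<theta>) * 1 + \<theta> * induced_norm N (mat 1 + h2 *\<^sub>R M)"
    using induced_comb[OF assms(1), of "1 - \<theta>" "mat 1" \<theta> "mat 1 + h2 *\<^sub>R M"] th induced_id[OF assms(1)]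
    unfolding eq by simp
  then have "induced_norm N (mat 1 + h1 *\<^sub>R M) - 1 \<le> \<theta> * (induced_norm N (mat 1 + h2 *\<^sub>R M) - 1)"
    by (simp add: algebra_simps)
  then have "(induced_norm N (mat 1 + h1 *\<^sub>R M) - 1) / h1 \<le> \<theta> * (induced_norm N (mat 1 + h2 *\<^sub>R M) - 1) / h1"
    using assms(2) by (simp add: divide_right_mono)
  also have "\<dots> = (induced_norm N (mat 1 + h2 *\<^sub>R M) - 1) / h2"
    using assms(2) h2 unfolding \<theta>_def by simp
  finally show ?thesis unfolding fq_def .
qed

lemma fq_lower:
  fixes N :: "real^'n \<Rightarrow> real"
  assumes "is_vector_norm N" "0 < h"
  shows "- induced_norm N M \<le> fq N M h"
proof -
  have "(mat 1 :: real^'n^'n) = (mat 1 + h *\<^sub>R M) + (- h) *\<^sub>R M" by simp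
  then have "1 \<le> induced_norm N (mat 1 + h *\<^sub>R M) + h * induced_norm N M"
    using induced_add[OF assms(1), of "mat 1 + h *\<^sub>R M" "(- h) *\<^sub>R M"] induced_scale[OF assms(1), of "-h" M]
      induced_id[OF assms(1)] assms(2) by (metis abs_minus_cancel abs_of_pos add_left_mono order.trans)
  then show ?thesis unfolding fq_def using assms(2) by (simp add: field_simps)
qed

lemma fq_upper:
  fixes N :: "real^'n \<Rightarrow> real"
  assumes "is_vector_norm N" "0 < h"
  shows "fq N M h \<le> induced_norm N M"
proof -
  have "induced_norm N (mat 1 + h *\<^sub>R M) \<le> 1 + h * induced_norm N M"
    using induced_add[OF assms(1), of "mat 1" "h *\<^sub>R M"] induced_scale[OF assms(1), of h M]
      induced_id[OF assms(1)] assms(2) by simp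
  then show ?thesis unfolding fq_def using assms(2) by (simp add: field_simps)
qed

lemma fq_bdd:
  fixes N :: "real^'n \<Rightarrow> real"
  assumes "is_vector_norm N"
  shows "bdd_below (fq N M ` {0<..})"
  using fq_lower[OF assms] by (intro bdd_belowI[of _ "- induced_norm N M"]) auto

lemma fq_tendsto:
  fixes N :: "real^'n \<Rightarrow> real"
  assumes "is_vector_norm N"
  shows "(fq N M \<longlongrightarrow> Inf (fq N M ` {0<..})) (at_right 0)"
proof (rule tendstoI)
  fix e :: real assume e: "e > 0"
  let ?L = "Inf (fq N M ` {0<..})"
  have "?L < ?L + e" using e by simp
  then obtain y where "y \<in> fq N M ` {0<..}" "y < ?L + e"
    using cInf_lessD[of "fq N M ` {0<..}" "?L + e"] by auto
  then obtain h0 where h0: "h0 > 0" "fq N M h0 < ?L + e" by auto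
  show "\<forall>\<^sub>F h in at_right 0. dist (fq N M h) ?L < e"
    using eventually_at_right_real[OF h0(1)]
  proof eventually_elim
    case (elim h)
    then have "0 < h" "h < h0" by auto
    have "?L \<le> fq N M h" using fq_bdd[OF assms] \<open>0 < h\<close> by (intro cInf_lower) auto
    moreover have "fq N M h \<le> fq N M h0" using fq_mono[OF assms \<open>0<h\<close>] \<open>h<h0\<close> by simp
    ultimately show ?case using h0 by (simp add: dist_real_def)
  qed
qed

lemma log_norm_eq:
  fixes N :: "real^'n \<Rightarrow> real"
  assumes "is_vector_norm N"
  shows "log_norm N M = Inf (fq N M ` {0<..})"
proof -
  have "log_norm N M = Lim (at_right 0) (fq N M)"
    unfolding log_norm_def fq_def[abs_def] by simp
  then show ?thesis using tendsto_Lim[OF _ fq_tendsto[OF assms]] by simp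
qed

lemma log_norm_tendsto:
  fixes N :: "real^'n \<Rightarrow> real"
  assumes "is_vector_norm N"
  shows "(fq N M \<longlongrightarrow> log_norm N M) (at_right 0)"
  using fq_tendsto[OF assms] log_norm_eq[OF assms] by simp

lemma log_norm_le_fq:
  fixes N :: "real^'n \<Rightarrow> real"
  assumes "is_vector_norm N" "0 < h"
  shows "log_norm N M \<le> fq N M h"
  unfolding log_norm_eq[OF assms(1)] using fq_bdd[OF assms(1)] assms(2) by (intro cInf_lower) auto

lemma log_norm_abs:
  fixes N :: "real^'n \<Rightarrow> real"
  assumes "is_vector_norm N"
  shows "\<bar>log_norm N M\<bar> \<le> induced_norm N M"
proof -
  have "log_norm N M \<le> induced_norm N M" using log_norm_le_fq[OF assms, of 1 M] fq_upper[OF assms, of 1 M] by simp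
  moreover have "- induced_norm N M \<le> log_norm N M"
    unfolding log_norm_eq[OF assms] using fq_lower[OF assms] by (intro cInf_greatest) auto
  ultimately show ?thesis by linarith
qed

lemma log_norm_lip1:
  fixes N :: "real^'n \<Rightarrow> real"
  assumes "is_vector_norm N"
  shows "log_norm N M1 \<le> log_norm N M2 + induced_norm N (M1 - M2)"
proof -
  have "log_norm N M1 - induced_norm N (M1 - M2) \<le> log_norm N M2"
    unfolding log_norm_eq[OF assms, of M2]
  proof (rule cInf_greatest)
    show "fq N M2 ` {0<..} \<noteq> {}" by auto
    fix y assume "y \<in> fq N M2 ` {0<..}"
    then obtain h where h: "h > 0" "y = fq N M2 h" by auto
    have "mat 1 + h *\<^sub>R M1 = (mat 1 + h *\<^sub>R M2) + h *\<^sub>R (M1 - M2)" by (simp add: algebra_simps)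
    then have "induced_norm N (mat 1 + h *\<^sub>R M1) \<le> induced_norm N (mat 1 + h *\<^sub>R M2) + h * induced_norm N (M1 - M2)"
      using induced_add[OF assms, of "mat 1 + h *\<^sub>R M2" "h *\<^sub>R (M1 - M2)"] induced_scale[OF assms, of h "M1 - M2"] h(1)
      by (metis abs_of_pos add_left_mono order_trans)
    then have "fq N M1 h \<le> fq N M2 h + induced_norm N (M1 - M2)"
      unfolding fq_def using h(1) by (simp add: field_simps)
    then show "log_norm N M1 - induced_norm N (M1 - M2) \<le> y"
      using log_norm_le_fq[OF assms h(1), of M1] h(2) by linarith
  qed
  then show ?thesis by simp
qed

lemma log_norm_lip:
  fixes N :: "real^'n \<Rightarrow> real"
  assumes "is_vector_norm N"
  shows "\<bar>log_norm N M1 - log_norm N M2\<bar> \<le> induced_norm N (M1 - M2)"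
  using log_norm_lip1[OF assms, of M1 M2] log_norm_lip1[OF assms, of M2 M1] induced_minus[OF assms, of "M1 - M2"]
  by simp

lemma log_norm_event:
  fixes N :: "real^'n \<Rightarrow> real"
  assumes "is_vector_norm N" "\<delta> > 0"
  shows "\<forall>\<^sub>F h in at_right 0. induced_norm N (mat 1 + h *\<^sub>R M) \<le> 1 + h * (log_norm N M + \<delta>)"
proof -
  have "\<forall>\<^sub>F h in at_right 0. dist (fq N M h) (log_norm N M) < \<delta>"
    using tendstoD[OF log_norm_tendsto[OF assms(1)] assms(2)] .
  moreover have "\<forall>\<^sub>F h in at_right (0::real). h > 0" by (simp add: eventually_at_right_less)
  ultimately show ?thesis
  proof eventually_elim
    case (elim h)
    then have "(induced_norm N (mat 1 + h *\<^sub>R M) - 1) / h < log_norm N M + \<delta>"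
      unfolding fq_def by (simp add: dist_real_def)
    then show ?case using elim(2) by (simp add: field_simps)
  qed
qed



lemma dini_M1:
  fixes z :: "real \<Rightarrow> real"
  assumes ab: "\<alpha> \<le> \<beta>" and cont: "continuous_on {\<alpha>..\<beta>} z" and d: "\<delta> > 0"
   and dini: "\<And>t. t \<in> {\<alpha>..<\<beta>} \<Longrightarrow> \<forall>\<delta>>0. \<forall>\<^sub>F h in at_right 0. z (t+h) \<le> z t + h*\<delta>"
  shows "z \<beta> \<le> z \<alpha> + \<delta> * (\<beta> - \<alpha>)"
proof -
  define g where "g \<tau> = z \<tau> - z \<alpha> - \<delta> * (\<tau> - \<alpha>)" for \<tau>
  have gc: "continuous_on {\<alpha>..\<beta>} g" unfolding g_def by (intro continuous_intros cont)
  define P where "P = {t \<in> {\<alpha>..\<beta>}. \<forall>\<tau>\<in>{\<alpha>..t}. g \<tau> \<le> 0}"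
  have aP: "\<alpha> \<in> P" unfolding P_def g_def using ab by auto
  have bdd: "bdd_above P" unfolding P_def by (intro bdd_aboveI[of _ \<beta>]) auto
  define s where "s = Sup P"
  have s1: "\<alpha> \<le> s" unfolding s_def using aP bdd by (rule cSup_upper)
  have s2: "s \<le> \<beta>" unfolding s_def using aP by (intro cSup_least) (auto simp: P_def)
  have below: "g \<tau> \<le> 0" if h1: "\<alpha> \<le> \<tau>" and h2: "\<tau> < s" for \<tau>
  proof -
    obtain t where "t \<in> P" "\<tau> < t" using less_cSupD[of P \<tau>] aP h2 unfolding s_def by blast
    then show ?thesis unfolding P_def using h1 by auto
  qed
  have gs: "g s \<le> 0"
  proof (rule ccontr)
    assume "\<not> g s \<le> 0"
    then have pos: "g s > 0" by simp
    from gc s1 s2 obtain d where d: "d > 0" "\<forall>\<tau>\<in>{\<alpha>..\<beta>}. dist \<tau> s < d \<longrightarrow> dist (g \<tau>) (g s) < g s"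
      unfolding continuous_on_iff using pos by (metis atLeastAtMost_iff)
    show False
    proof (cases "s = \<alpha>")
      case True then show False using pos unfolding g_def by simp
    next
      case False
      define \<tau> where "\<tau> = max \<alpha> (s - d/2)"
      have "\<alpha> \<le> \<tau>" "\<tau> < s" "\<tau> \<le> \<beta>" "dist \<tau> s < d" using False s1 s2 d(1) unfolding \<tau>_def dist_real_def by auto
      then have "g \<tau> \<le> 0" "dist (g \<tau>) (g s) < g s" using below d(2) by auto
      then show False by (simp add: dist_real_def)
    qed
  qed
  have sP: "s \<in> P" unfolding P_def
  proof (intro CollectI conjI ballI)
    show "s \<in> {\<alpha>..\<beta>}" using s1 s2 by simp
    fix \<tau> assume t: "\<tau> \<in> {\<alpha>..s}"
    show "g \<tau> \<le> 0"
    proof (cases "\<tau> = s")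
      case True then show ?thesis using gs by simp
    next
      case False then show ?thesis using t below by simp
    qed
  qed
  have "s = \<beta>"
  proof (rule ccontr)
    assume "s \<noteq> \<beta>"
    then have "s < \<beta>" using s2 by simp
    have "\<forall>\<^sub>F h in at_right 0. z (s+h) \<le> z s + h*(\<delta>/2)" proof -
      have "\<forall>\<delta>>0. \<forall>\<^sub>F h in at_right 0. z (s+h) \<le> z s + h*\<delta>" using dini[of s] s1 \<open>s < \<beta>\<close> by simp
      then show ?thesis using d by (metis half_gt_zero)
    qed
    then obtain \<eta> where \<eta>: "\<eta> > 0" "\<And>h. 0 < h \<Longrightarrow> h < \<eta> \<Longrightarrow> z (s+h) \<le> z s + h*(\<delta>/2)"
      unfolding eventually_at_right_field by auto
    define m where "m = min \<eta> (\<beta> - s)"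
    have m: "0 < m" "m \<le> \<beta> - s" "m \<le> \<eta>" using \<eta>(1) \<open>s < \<beta>\<close> unfolding m_def by auto
    define t where "t = s + m / 2"
    have "t \<in> P" unfolding P_def
    proof (intro CollectI conjI ballI)
      show "t \<in> {\<alpha>..\<beta>}" using s1 m unfolding t_def by simp
      fix \<tau> assume "\<tau> \<in> {\<alpha>..t}"
      show "g \<tau> \<le> 0"
      proof (cases "\<tau> \<le> s")
        case True then show ?thesis using below gs \<open>\<tau> \<in> {\<alpha>..t}\<close> by (cases "\<tau> = s") auto
      next
        case False
        define h where "h = \<tau> - s"
        have h: "0 < h" "h < \<eta>" using False \<open>\<tau> \<in> {\<alpha>..t}\<close> m unfolding h_def t_def by auto
        have "z \<tau> \<le> z s + h*(\<delta>/2)" using \<eta>(2)[OF h] unfolding h_def by simp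
        moreover have "h*(\<delta>/2) \<le> \<delta>*h" using h(1) d by simp
        moreover have "\<delta>*(\<tau>-\<alpha>) = \<delta>*(s-\<alpha>) + \<delta>*h" unfolding h_def by (simp add: algebra_simps)
        ultimately show ?thesis using gs unfolding g_def by linarith
      qed
    qed
    then have "t \<le> s" unfolding s_def using bdd by (rule cSup_upper)
    then show False using m unfolding t_def by simp
  qed
  then show ?thesis using gs unfolding g_def by simp
qed

lemma dini_M0:
  fixes z :: "real \<Rightarrow> real"
  assumes ab: "\<alpha> \<le> \<beta>" and cont: "continuous_on {\<alpha>..\<beta>} z"
   and dini: "\<And>t. t \<in> {\<alpha><..<\<beta>} \<Longrightarrow> \<forall>\<delta>>0. \<forall>\<^sub>F h in at_right 0. z (t+h) \<le> z t + h*\<delta>"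
  shows "z \<beta> \<le> z \<alpha>"
proof (cases "\<alpha> = \<beta>")
  case True then show ?thesis by simp
next
  case False
  then have lt: "\<alpha> < \<beta>" using ab by simp
  have inner: "z \<beta> \<le> z a'" if "\<alpha> < a'" "a' < \<beta>" for a'
  proof -
    have c': "continuous_on {a'..\<beta>} z" by (rule continuous_on_subset[OF cont]) (use that in simp)
    have eps: "z \<beta> \<le> z a' + \<delta> * (\<beta> - a')" if "\<delta> > 0" for \<delta>
    proof (rule dini_M1[OF _ c' that])
      show "a' \<le> \<beta>" using \<open>a' < \<beta>\<close> by simp
      fix t assume "t \<in> {a'..<\<beta>}"
      then have "t \<in> {\<alpha><..<\<beta>}" using \<open>\<alpha> < a'\<close> by simp
      then show "\<forall>\<delta>>0. \<forall>\<^sub>F h in at_right 0. z (t+h) \<le> z t + h*\<delta>" by (rule dini)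
    qed
    show ?thesis
    proof (rule field_le_epsilon)
      fix e :: real assume "e > 0"
      then show "z \<beta> \<le> z a' + e" using eps[of "e / (\<beta> - a')"] \<open>a' < \<beta>\<close> by simp
    qed
  qed
  show ?thesis
  proof (rule ccontr)
    assume "\<not> z \<beta> \<le> z \<alpha>"
    then have pos: "z \<beta> - z \<alpha> > 0" by simp
    have aIn: "\<alpha> \<in> {\<alpha>..\<beta>}" using lt by simp
    obtain d where d: "d > 0" "\<forall>\<tau>\<in>{\<alpha>..\<beta>}. dist \<tau> \<alpha> < d \<longrightarrow> dist (z \<tau>) (z \<alpha>) < z \<beta> - z \<alpha>"
      using cont[unfolded continuous_on_iff, rule_format, OF aIn pos] by blast
    define m where "m = min d (\<beta> - \<alpha>)"
    have m: "0 < m" "m \<le> \<beta> - \<alpha>" "m \<le> d" using d(1) lt unfolding m_def by auto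
    define a' where "a' = \<alpha> + m / 2"
    have "\<alpha> < a'" "a' < \<beta>" "dist a' \<alpha> < d" using m unfolding a'_def dist_real_def by auto
    then have "dist (z a') (z \<alpha>) < z \<beta> - z \<alpha>" "z \<beta> \<le> z a'"
      using d(2)[rule_format, of a'] inner[of a'] by simp_all
    then show False by (simp add: dist_real_def)
  qed
qed

lemma dini_mono:
  fixes z :: "real \<Rightarrow> real"
  assumes "finite E"
  shows "\<alpha> \<le> \<beta> \<Longrightarrow> continuous_on {\<alpha>..\<beta>} z \<Longrightarrow>
     (\<And>t. t \<in> {\<alpha><..<\<beta>} - E \<Longrightarrow> \<forall>\<delta>>0. \<forall>\<^sub>F h in at_right 0. z (t+h) \<le> z t + h*\<delta>) \<Longrightarrow> z \<beta> \<le> z \<alpha>"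
proof (induction "card (E \<inter> {\<alpha><..<\<beta>})" arbitrary: \<alpha> \<beta> rule: less_induct)
  case (less \<alpha> \<beta>)
  show ?case
  proof (cases "E \<inter> {\<alpha><..<\<beta>} = {}")
    case True
    show ?thesis
    proof (rule dini_M0[OF less(2,3)])
      fix t assume t: "t \<in> {\<alpha><..<\<beta>}"
      then have "t \<notin> E" using True by blast
      with t have "t \<in> {\<alpha><..<\<beta>} - E" by simp
      then show "\<forall>\<delta>>0. \<forall>\<^sub>F h in at_right 0. z (t+h) \<le> z t + h*\<delta>" by (rule less(4))
    qed
  next
    case False
    then obtain e where e: "e \<in> E" "\<alpha> < e" "e < \<beta>" by auto
    have fin: "finite (E \<inter> {\<alpha><..<\<beta>})" using assms by simp
    have s1: "E \<inter> {\<alpha><..<e} \<subseteq> E \<inter> {\<alpha><..<\<beta>}" "E \<inter> {e<..<\<beta>} \<subseteq> E \<inter> {\<alpha><..<\<beta>}"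
      using e by (auto simp: subset_eq)
    have s2: "e \<in> E \<inter> {\<alpha><..<\<beta>}" "e \<notin> E \<inter> {\<alpha><..<e}" "e \<notin> E \<inter> {e<..<\<beta>}" using e by auto
    have c1: "card (E \<inter> {\<alpha><..<e}) < card (E \<inter> {\<alpha><..<\<beta>})"
      by (rule psubset_card_mono[OF fin]) (use s1 s2 in blast)
    have c2: "card (E \<inter> {e<..<\<beta>}) < card (E \<inter> {\<alpha><..<\<beta>})"
      by (rule psubset_card_mono[OF fin]) (use s1 s2 in blast)
    have "z e \<le> z \<alpha>"
    proof (rule less(1)[OF c1])
      show "\<alpha> \<le> e" using e by simp
      show "continuous_on {\<alpha>..e} z" by (rule continuous_on_subset[OF less(3)]) (use e in simp)
      fix t assume t: "t \<in> {\<alpha><..<e} - E"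
      have "t \<in> {\<alpha><..<\<beta>} - E" using t e by simp
      then show "\<forall>\<delta>>0. \<forall>\<^sub>F h in at_right 0. z (t+h) \<le> z t + h*\<delta>" by (rule less(4))
    qed
    moreover have "z \<beta> \<le> z e"
    proof (rule less(1)[OF c2])
      show "e \<le> \<beta>" using e by simp
      show "continuous_on {e..\<beta>} z" by (rule continuous_on_subset[OF less(3)]) (use e in simp)
      fix t assume t: "t \<in> {e<..<\<beta>} - E"
      have "t \<in> {\<alpha><..<\<beta>} - E" using t e by simp
      then show "\<forall>\<delta>>0. \<forall>\<^sub>F h in at_right 0. z (t+h) \<le> z t + h*\<delta>" by (rule less(4))
    qed
    ultimately show ?thesis by simp
  qed
qed



lemma bb_mv: "bounded_bilinear (\<lambda>(M::real^'n^'n) (v::real^'n). M *v v)"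
proof (rule bounded_bilinear.intro)
  show "\<exists>K. \<forall>(a::real^'n^'n) b. norm (a *v b) \<le> norm a * norm b * K"
    using mat_norm_bound by (intro exI[of _ "real CARD('n) * real CARD('n)"]) (auto simp: algebra_simps)
qed (auto simp: algebra_simps matrix_vector_right_distrib scaleR_matrix_vector_assoc)

lemma isCont_mv:
  fixes M :: "real \<Rightarrow> real^'n^'n" and v :: "real \<Rightarrow> real^'n"
  assumes "isCont M t" "isCont v t"
  shows "isCont (\<lambda>s. M s *v v s) t"
  using bounded_bilinear.continuous[OF bb_mv assms] .

lemma pc_isCont:
  fixes f :: "real \<Rightarrow> 'a::topological_space" and t0 :: real
  assumes "finite S" "continuous_on ({t0..b} - S) f" "t \<in> {t0<..<b} - S"
  shows "isCont f t"
proof -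
  have "open ({t0<..<b} - S)" using assms(1) by (intro open_Diff finite_imp_closed open_greaterThanLessThan)
  moreover have "{t0<..<b} - S \<subseteq> {t0..b} - S" by auto
  ultimately have "t \<in> interior ({t0..b} - S)" using assms(3) by (meson interior_maximal subsetD)
  then show ?thesis using continuous_on_interior[OF assms(2)] by simp
qed

lemma pc2_isCont:
  fixes w :: "'b::metric_space \<Rightarrow> real \<Rightarrow> 'a::metric_space"
  assumes "finite S" "continuous_on (UNIV \<times> ({t0..b} - S)) (\<lambda>(y, t). w y t)" "t \<in> {t0<..<b} - S"
  shows "isCont (\<lambda>(y, t). w y t) (y, t)"
proof -
  have "open ({t0<..<b} - S)" using assms(1) by (intro open_Diff finite_imp_closed open_greaterThanLessThan)
  moreover have "{t0<..<b} - S \<subseteq> {t0..b} - S" by auto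
  ultimately have "t \<in> interior ({t0..b} - S)" using assms(3) by (meson interior_maximal subsetD)
  then have "(y, t) \<in> interior (UNIV \<times> ({t0..b} - S))" by (simp add: interior_Times)
  then show ?thesis using continuous_on_interior[OF assms(2)] by simp
qed

lemma DERIV_right_le:
  fixes f :: "real \<Rightarrow> real"
  assumes "(f has_real_derivative f') (at 0)" "\<delta> > 0"
  shows "\<forall>\<^sub>F h in at_right 0. f h \<le> f 0 + h * (f' + \<delta>)"
proof -
  have "((\<lambda>y. (f y - f 0) / (y - 0)) \<longlongrightarrow> f') (at 0)"
    using assms(1) has_field_derivative_iff by blast
  then have "\<forall>\<^sub>F h in at 0. dist ((f h - f 0) / (h - 0)) f' < \<delta>" using assms(2) by (rule tendstoD)
  then have "\<forall>\<^sub>F h in at_right 0. dist ((f h - f 0) / (h - 0)) f' < \<delta>"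
    by (rule filter_leD[OF at_le, rotated]) simp
  moreover have "\<forall>\<^sub>F h in at_right (0::real). h > 0" by (simp add: eventually_at_right_less)
  ultimately show ?thesis
  proof eventually_elim
    case (elim h)
    then have "(f h - f 0) / h < f' + \<delta>" by (simp add: dist_real_def)
    then show ?case using elim(2) by (simp add: field_simps)
  qed
qed

lemma vderiv_err:
  fixes x :: "real \<Rightarrow> 'a::real_normed_vector"
  assumes "(x has_vector_derivative G) (at t)" "\<delta> > 0"
  shows "\<forall>\<^sub>F h in at_right 0. norm (x (t+h) - x t - h *\<^sub>R G) \<le> h * \<delta>"
proof -
  have "((\<lambda>y. norm ((x y - x t) - (y - t) *\<^sub>R G) / norm (y - t)) \<longlongrightarrow> 0) (at t)"
    using assms(1) unfolding has_vector_derivative_def has_derivative_iff_norm by blast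
  then have "\<forall>\<^sub>F y in at t. dist (norm ((x y - x t) - (y - t) *\<^sub>R G) / norm (y - t)) 0 < \<delta>"
    using assms(2) by (rule tendstoD)
  then obtain d where d: "d > 0" "\<And>y. y \<noteq> t \<Longrightarrow> dist y t < d \<Longrightarrow>
      dist (norm ((x y - x t) - (y - t) *\<^sub>R G) / norm (y - t)) 0 < \<delta>"
    unfolding eventually_at by blast
  show ?thesis unfolding eventually_at_right_field
  proof (intro exI[of _ d] conjI allI impI)
    show "0 < d" by fact
    fix h :: real assume h: "0 < h" "h < d"
    have "dist (norm ((x (t+h) - x t) - (t + h - t) *\<^sub>R G) / norm (t + h - t)) 0 < \<delta>"
      using d(2)[of "t+h"] h by (simp add: dist_real_def)
    then have "norm (x (t+h) - x t - h *\<^sub>R G) / h < \<delta>" using h by simp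
    then show "norm (x (t+h) - x t - h *\<^sub>R G) \<le> h * \<delta>" using h by (simp add: field_simps)
  qed
qed

lemma ev_scale:
  assumes "\<forall>\<^sub>F h in at_right (0::real). P h" "c > 0"
  shows "\<forall>\<^sub>F h in at_right (0::real). P (c * h)"
proof -
  obtain b where b: "b > 0" "\<And>y. 0 < y \<Longrightarrow> y < b \<Longrightarrow> P y" using assms(1) unfolding eventually_at_right_field by auto
  show ?thesis unfolding eventually_at_right_field
  proof (intro exI[of _ "b / c"] conjI allI impI)
    show "0 < b / c" using b assms(2) by simp
    fix y :: real assume "0 < y" "y < b / c"
    then show "P (c * y)" using b(2)[of "c * y"] assms(2) by (simp add: field_simps)
  qed
qed

lemma log_norm_isCont:
  fixes N :: "real^'n \<Rightarrow> real" and M :: "real \<Rightarrow> real^'n^'n"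
  assumes "is_vector_norm N" "isCont M t"
  shows "isCont (\<lambda>s. log_norm N (M s)) t"
proof -
  obtain K where K: "K > 0" "\<forall>X::real^'n^'n. induced_norm N X \<le> K * norm X" using induced_norm_le[OF assms(1)] by blast
  show ?thesis unfolding continuous_at_eps_delta
  proof (intro allI impI)
    fix e :: real assume e: "e > 0"
    obtain d where d: "d > 0" "\<And>y. dist y t < d \<Longrightarrow> dist (M y) (M t) < e / K"
      using assms(2) e K(1) unfolding continuous_at_eps_delta by (metis divide_pos_pos)
    show "\<exists>d>0. \<forall>y. dist y t < d \<longrightarrow> dist (log_norm N (M y)) (log_norm N (M t)) < e"
    proof (intro exI[of _ d] conjI allI impI)
      show "d > 0" by fact
      fix y assume "dist y t < d"
      then have "norm (M y - M t) < e / K" using d(2) by (simp add: dist_norm)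
      then have "K * norm (M y - M t) < e" using K(1) by (simp add: field_simps)
      moreover have "\<bar>log_norm N (M y) - log_norm N (M t)\<bar> \<le> K * norm (M y - M t)"
        using log_norm_lip[OF assms(1), of "M y" "M t"] K(2) by (meson order_trans)
      ultimately show "dist (log_norm N (M y)) (log_norm N (M t)) < e" by (simp add: dist_real_def)
    qed
  qed
qed



lemma L_u:
  fixes N :: "real^'n \<Rightarrow> real" and x :: "real \<Rightarrow> real^'n" and M D :: "real^'n^'n"
  assumes vn: "is_vector_norm N"
   and der: "(x has_vector_derivative ((M + D) *v x t + w)) (at t)"
   and wg: "N w \<le> g"
   and d0: "\<delta> > 0"
  shows "\<forall>\<^sub>F h in at_right 0. N (x (t+h)) \<le> N (x t) + h * ((log_norm N M + log_norm N D) * N (x t) + g + \<delta>)"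
proof -
  obtain C where C: "C > 0" "\<forall>v::real^'n. N v \<le> C * norm v" using vn_upper[OF vn] by blast
  define u where "u = N (x t)"
  have u0: "u \<ge> 0" unfolding u_def using vnD(1)[OF vn] by simp
  define \<delta>1 where "\<delta>1 = \<delta> / (4 * (u + 1))"
  define \<delta>2 where "\<delta>2 = \<delta> / (2 * C)"
  have d1: "\<delta>1 > 0" unfolding \<delta>1_def using d0 u0 by simp
  have d2: "\<delta>2 > 0" unfolding \<delta>2_def using d0 C by simp
  have k1: "2 * \<delta>1 * u \<le> \<delta> / 2" unfolding \<delta>1_def using d0 u0 by (simp add: field_simps)
  have k2: "C * \<delta>2 = \<delta> / 2" unfolding \<delta>2_def using C by simp
  let ?G = "(M + D) *v x t + w"
  let ?aM = "log_norm N M" and ?aD = "log_norm N D"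
  have E1: "\<forall>\<^sub>F h in at_right 0. induced_norm N (mat 1 + (2*h) *\<^sub>R M) \<le> 1 + (2*h) * (?aM + \<delta>1)"
    by (rule ev_scale[OF log_norm_event[OF vn d1]]) simp
  have E2: "\<forall>\<^sub>F h in at_right 0. induced_norm N (mat 1 + (2*h) *\<^sub>R D) \<le> 1 + (2*h) * (?aD + \<delta>1)"
    by (rule ev_scale[OF log_norm_event[OF vn d1]]) simp
  have E3: "\<forall>\<^sub>F h in at_right 0. norm (x (t+h) - x t - h *\<^sub>R ?G) \<le> h * \<delta>2"
    by (rule vderiv_err[OF der d2])
  have E4: "\<forall>\<^sub>F h in at_right (0::real). h > 0" by (simp add: eventually_at_right_less)
  from E1 E2 E3 E4 show ?thesis
  proof eventually_elim
    case (elim h)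
    have eqm: "mat 1 + h *\<^sub>R (M + D) = (1/2) *\<^sub>R (mat 1 + (2*h) *\<^sub>R M) + (1/2) *\<^sub>R (mat 1 + (2*h) *\<^sub>R D)"
      by (simp add: vec_eq_iff mat_def algebra_simps)
    have IM: "induced_norm N (mat 1 + h *\<^sub>R (M + D)) \<le> 1 + h * (?aM + ?aD + 2 * \<delta>1)"
    proof -
      have "induced_norm N (mat 1 + h *\<^sub>R (M + D)) \<le> (1/2) * induced_norm N (mat 1 + (2*h) *\<^sub>R M) + (1/2) * induced_norm N (mat 1 + (2*h) *\<^sub>R D)"
        using induced_comb[OF vn, of "1/2" "mat 1 + (2*h) *\<^sub>R M" "1/2" "mat 1 + (2*h) *\<^sub>R D"] unfolding eqm by simp
      also have "\<dots> \<le> (1/2) * (1 + (2*h) * (?aM + \<delta>1)) + (1/2) * (1 + (2*h) * (?aD + \<delta>1))"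
        using elim(1,2) by (intro add_mono mult_left_mono) auto
      also have "\<dots> = 1 + h * (?aM + ?aD + 2 * \<delta>1)" by (simp add: algebra_simps)
      finally show ?thesis .
    qed
    have eqx: "x t + h *\<^sub>R ?G = (mat 1 + h *\<^sub>R (M + D)) *v x t + h *\<^sub>R w"
      by (simp add: algebra_simps scaleR_matrix_vector_assoc[symmetric])
    have "N (x (t+h)) \<le> N (x t + h *\<^sub>R ?G) + N (x (t+h) - x t - h *\<^sub>R ?G)"
      using vnD(4)[OF vn, of "x t + h *\<^sub>R ?G" "x (t+h) - x t - h *\<^sub>R ?G"] by simp
    also have "N (x (t+h) - x t - h *\<^sub>R ?G) \<le> C * (h * \<delta>2)"
      using C(2) elim(3) C(1) by (meson mult_left_mono less_imp_le order_trans)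
    also have "N (x t + h *\<^sub>R ?G) \<le> N ((mat 1 + h *\<^sub>R (M + D)) *v x t) + N (h *\<^sub>R w)"
      unfolding eqx by (rule vnD(4)[OF vn])
    also have "N (h *\<^sub>R w) \<le> h * g" using vnD(3)[OF vn, of h w] elim(4) wg by (simp add: mult_left_mono)
    also have "N ((mat 1 + h *\<^sub>R (M + D)) *v x t) \<le> (1 + h * (?aM + ?aD + 2 * \<delta>1)) * u"
      using induced_le[OF vn, of "mat 1 + h *\<^sub>R (M + D)" "x t"] IM u0 unfolding u_def
      by (meson mult_right_mono order_trans)
    finally have "N (x (t+h)) \<le> (1 + h * (?aM + ?aD + 2 * \<delta>1)) * u + h * g + C * (h * \<delta>2)" by simp
    also have "\<dots> = u + h * ((?aM + ?aD) * u + g + (2 * \<delta>1 * u + C * \<delta>2))" by (simp add: algebra_simps)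
    also have "\<dots> \<le> u + h * ((?aM + ?aD) * u + g + \<delta>)"
      using k1 k2 elim(4) by (intro add_left_mono mult_left_mono) auto
    finally show ?case unfolding u_def .
  qed
qed

lemma L_z:
  fixes u p q :: "real \<Rightarrow> real"
  assumes dp: "(p has_real_derivative a) (at t)" and dq: "(q has_real_derivative r) (at t)"
   and pq: "p t \<le> q t" and a: "a \<le> 0" and eps: "\<epsilon> \<ge> 0" and c: "c \<le> r * u t - \<epsilon> * a"
   and du: "\<And>\<delta>. \<delta> > 0 \<Longrightarrow> \<forall>\<^sub>F h in at_right 0. u (t+h) \<le> u t + h*(c+\<delta>)"
  shows "\<forall>\<delta>>0. \<forall>\<^sub>F h in at_right 0. exp (- q (t+h)) * u (t+h) - \<epsilon> * exp (- p (t+h))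
            \<le> (exp (- q t) * u t - \<epsilon> * exp (- p t)) + h * \<delta>"
proof (intro allI impI)
  fix \<delta> :: real assume d0: "\<delta> > 0"
  define \<delta>1 where "\<delta>1 = \<delta> / 2 * exp (q t)"
  have d1: "\<delta>1 > 0" unfolding \<delta>1_def using d0 by simp
  define \<Phi> where "\<Phi> h = exp (- q (h + t)) * (u t + h * (c + \<delta>1)) - \<epsilon> * exp (- p (h + t))" for h
  define \<Phi>' where "\<Phi>' = exp (- q t) * (- r) * (u t + 0 * (c + \<delta>1)) + exp (- q t) * (c + \<delta>1) - \<epsilon> * (exp (- p t) * (- a))"
  have q0: "((\<lambda>h. q (h + t)) has_real_derivative r) (at 0)" using DERIV_shift[of q r 0 t] dq by simp
  have p0: "((\<lambda>h. p (h + t)) has_real_derivative a) (at 0)" using DERIV_shift[of p a 0 t] dp by simp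
  have "(\<Phi> has_real_derivative \<Phi>') (at 0)"
    unfolding \<Phi>_def[abs_def] \<Phi>'_def
    by (intro derivative_eq_intros) (auto simp: algebra_simps intro: q0 p0)
  from DERIV_right_le[OF this, of "\<delta>/2"] d0
  have E1: "\<forall>\<^sub>F h in at_right 0. \<Phi> h \<le> \<Phi> 0 + h * (\<Phi>' + \<delta>/2)" by simp
  have E2: "\<forall>\<^sub>F h in at_right 0. u (t+h) \<le> u t + h*(c+\<delta>1)" by (rule du[OF d1])
  have E4: "\<forall>\<^sub>F h in at_right (0::real). h > 0" by (simp add: eventually_at_right_less)
  have phi': "\<Phi>' \<le> \<delta> / 2"
  proof -
    have "\<Phi>' = exp (- q t) * (c - r * u t) + exp (- q t) * \<delta>1 + \<epsilon> * a * exp (- p t)"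
      unfolding \<Phi>'_def by (simp add: algebra_simps)
    also have "exp (- q t) * \<delta>1 = \<delta> / 2" unfolding \<delta>1_def by (simp add: exp_minus field_simps)
    also have "exp (- q t) * (c - r * u t) \<le> exp (- q t) * (- \<epsilon> * a)" using c by (intro mult_left_mono) auto
    finally have "\<Phi>' \<le> \<epsilon> * a * (exp (- p t) - exp (- q t)) + \<delta> / 2" by (simp add: algebra_simps)
    moreover have "\<epsilon> * a * (exp (- p t) - exp (- q t)) \<le> 0"
    proof (rule mult_nonpos_nonneg)
      show "\<epsilon> * a \<le> 0" using eps a by (simp add: mult_nonneg_nonpos)
      show "0 \<le> exp (- p t) - exp (- q t)" using pq by simp
    qed
    ultimately show ?thesis by simp
  qed
  from E1 E2 E4 show "\<forall>\<^sub>F h in at_right 0. exp (- q (t+h)) * u (t+h) - \<epsilon> * exp (- p (t+h))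
            \<le> (exp (- q t) * u t - \<epsilon> * exp (- p t)) + h * \<delta>"
  proof eventually_elim
    case (elim h)
    have "exp (- q (t+h)) * u (t+h) \<le> exp (- q (t+h)) * (u t + h*(c+\<delta>1))"
      using elim(2) by (intro mult_left_mono) auto
    then have "exp (- q (t+h)) * u (t+h) - \<epsilon> * exp (- p (t+h)) \<le> \<Phi> h"
      unfolding \<Phi>_def by (simp add: add.commute)
    also have "\<dots> \<le> \<Phi> 0 + h * (\<Phi>' + \<delta>/2)" by (rule elim(1))
    also have "\<dots> \<le> \<Phi> 0 + h * \<delta>" using phi' elim(3) by (intro add_left_mono mult_left_mono) auto
    also have "\<Phi> 0 = exp (- q t) * u t - \<epsilon> * exp (- p t)" unfolding \<Phi>_def by simp
    finally show ?case .
  qed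
qed



lemma isCont_BK:
  fixes K :: "real \<Rightarrow> real^'n^'n" and B :: "real^'n^'n"
  assumes "isCont K t"
  shows "isCont (\<lambda>s. B ** K s) t"
proof -
  have lin: "linear ((**) B)"
    by (rule linearI) (simp_all add: matrix_add_ldistrib matrix_scalar_ac scalar_matrix_assoc)
  then have "bounded_linear ((**) B)" by (simp add: linear_conv_bounded_linear)
  then have "isCont ((**) B) (K t)" by (rule linear_continuous_at)
  from continuous_at_compose[OF assms this] show ?thesis by (simp add: o_def)
qed

lemma x_deriv:
  fixes G :: "real \<Rightarrow> real^'n" and x :: "real \<Rightarrow> real^'n"
  assumes sol: "\<forall>t\<ge>t0. (G has_integral (x t - x t0)) {t0..t}"
    and t: "t0 < t" "t < b" and cG: "isCont G t"
  shows "(x has_vector_derivative G t) (at t)"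
proof -
  have "(G has_integral (x b - x t0)) {t0..b}" using sol[rule_format, of b] t by linarith
  then have Gi: "G integrable_on {t0..b}" by (rule has_integral_integrable)
  have tin: "t \<in> {t0..b} - {}" using t by simp
  have "((\<lambda>u. integral {t0..u} G) has_vector_derivative G t) (at t within ({t0..b} - {}))"
    by (rule integral_has_vector_derivative_continuous_at[OF Gi tin finite.emptyI continuous_at_imp_continuous_at_within[OF cG]])
  moreover have "t \<in> interior {t0..b}" using t by simp
  ultimately have "((\<lambda>u. integral {t0..u} G) has_vector_derivative G t) (at t)"
    using at_within_interior[of t "{t0..b}"] by simp
  from has_vector_derivative_add[OF has_vector_derivative_const[of "x t0"] this]
  have d: "((\<lambda>u. x t0 + integral {t0..u} G) has_vector_derivative G t) (at t)" by simp
  show ?thesis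
  proof (rule has_vector_derivative_transform_within_open[OF d, of "{t0<..<b}"])
    show "open {t0<..<b}" by simp
    show "t \<in> {t0<..<b}" using t by simp
    fix y assume "y \<in> {t0<..<b}"
    then have "t0 \<le> y" by simp
    then have "(G has_integral (x y - x t0)) {t0..y}" using sol by blast
    then have "integral {t0..y} G = x y - x t0" by (rule integral_unique)
    then show "x t0 + integral {t0..y} G = x y" by simp
  qed
qed

lemma int_deriv:
  fixes f :: "real \<Rightarrow> real"
  assumes fi: "f integrable_on {c..b}" and t: "c < t" "t < b" and cf: "isCont f t"
  shows "((\<lambda>s. integral {c..s} f) has_real_derivative f t) (at t)"
proof -
  have tin: "t \<in> {c..b} - {}" using t by simp
  have "((\<lambda>u. integral {c..u} f) has_vector_derivative f t) (at t within ({c..b} - {}))"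
    by (rule integral_has_vector_derivative_continuous_at[OF fi tin finite.emptyI continuous_at_imp_continuous_at_within[OF cf]])
  moreover have "t \<in> interior {c..b}" using t by simp
  ultimately show ?thesis
    using at_within_interior[of t "{c..b}"] by (simp add: has_real_derivative_iff_has_vector_derivative)
qed



theorem theorem5:
  fixes t0 :: real
    and A \<Delta> K :: "real \<Rightarrow> real^'n^'n"
    and B :: "real^'n^'n"
    and \<omega> :: "real^'n \<Rightarrow> real \<Rightarrow> real^'n"
    and N :: "real^'n \<Rightarrow> real"
    and \<omega>t :: "real \<Rightarrow> real^'n"
    and x :: "real \<Rightarrow> real^'n"
  assumes pcA: "piecewise_continuous_from t0 A"
    and pcD: "piecewise_continuous_from t0 \<Delta>"
    and pcK: "piecewise_continuous_from t0 K"
    and pcw: "piecewise_continuous_state_time t0 \<omega>"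
    and norm: "is_vector_norm N"
    and A1: "(\<lambda>s. \<bar>log_norm N (\<Delta> s)\<bar>) integrable_on {t0..}"
    and A2: "\<exists>T\<ge>t0. \<forall>t\<ge>T. log_norm N (A t + B ** K t) < 0"
    and A3pc: "piecewise_continuous_from t0 \<omega>t"
    and A3bd: "\<forall>y. \<forall>t\<ge>t0. N (\<omega> y t) \<le> N (\<omega>t t)"
    and A3lim: "((\<lambda>t. N (\<omega>t t) / log_norm N (A t + B ** K t)) \<longlongrightarrow> 0) at_top"
    and A4: "filterlim (\<lambda>t. integral {t0..t} (\<lambda>s. log_norm N (A s + B ** K s))) at_bot at_top"
    and sol: "is_solution_from t0
                (\<lambda>y t. (A t + \<Delta> t) *v y + (B ** K t) *v y + \<omega> y t) x"
  shows "(x \<longlongrightarrow> 0) at_top"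
proof -
  define M where "M t = A t + B ** K t" for t
  define a where "a t = log_norm N (M t)" for t
  define d where "d t = \<bar>log_norm N (\<Delta> t)\<bar>" for t
  define g where "g t = N (\<omega>t t)" for t
  define u where "u t = N (x t)" for t
  define G where "G s = (A s + \<Delta> s) *v x s + (B ** K s) *v x s + \<omega> (x s) s" for s
  have xcont: "continuous_on {t0..} x" and solG: "\<forall>t\<ge>t0. (G has_integral (x t - x t0)) {t0..t}"
    using sol unfolding is_solution_from_def G_def by auto
  obtain T where T: "T \<ge> t0" "\<And>t. t \<ge> T \<Longrightarrow> a t < 0" using A2 unfolding a_def M_def by auto
  have A4': "filterlim (\<lambda>t. integral {t0..t} a) at_bot at_top" using A4 unfolding a_def M_def .
  have aint: "a integrable_on {c..e}" if "t0 \<le> c" for c e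
  proof -
    have "\<forall>\<^sub>F t in at_top. integral {t0..t} a \<le> -1" using A4' unfolding filterlim_at_bot by blast
    then obtain T' where T': "\<And>t. t \<ge> T' \<Longrightarrow> integral {t0..t} a \<le> -1" unfolding eventually_at_top_linorder by blast
    define t' where "t' = max e (max T' c)"
    have "integral {t0..t'} a \<le> -1" using T'[of t'] unfolding t'_def by simp
    then have "a integrable_on {t0..t'}" using not_integrable_integral by force
    moreover have "{c..e} \<subseteq> {t0..t'}" using that unfolding t'_def by auto
    ultimately show ?thesis by (rule integrable_on_subinterval)
  qed
  have dint: "d integrable_on {c..e}" if "t0 \<le> c" for c e
    using integrable_on_subinterval[OF A1[folded d_def], of c e] that by auto
  define I where "I = integral {t0..} d"
  have dnn: "0 \<le> d t" for t unfolding d_def by simp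
  have Dle: "integral {c..e} d \<le> I" if "t0 \<le> c" for c e
    unfolding I_def using that dnn by (intro integral_subset_le dint A1[folded d_def]) auto
  have Dge: "0 \<le> integral {c..e} d" if "t0 \<le> c" for c e
    using dnn by (intro integral_nonneg dint that) auto
  have I0: "0 \<le> I" using Dle[of t0 t0] Dge[of t0 t0] by simp
  obtain m where m: "m > 0" "\<And>v. m * norm v \<le> N v" using vn_lower[OF norm] by blast
  have unn: "0 \<le> u t" for t unfolding u_def using vnD(1)[OF norm] by simp
  have MC: "\<exists>T1\<ge>T. \<forall>t\<ge>T1. u t \<le> exp I * (u T1 * exp (integral {T1..t} a) + \<epsilon>)" if eps: "\<epsilon> > 0" for \<epsilon>
  proof -
    have "\<forall>\<^sub>F t in at_top. dist (g t / a t) 0 < \<epsilon>"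
      using tendstoD[OF A3lim eps] unfolding g_def a_def M_def .
    then obtain T2 where T2: "\<And>t. t \<ge> T2 \<Longrightarrow> dist (g t / a t) 0 < \<epsilon>"
      unfolding eventually_at_top_linorder by blast
    define T1 where "T1 = max T T2"
    have T1T: "T1 \<ge> T" and T1t0: "T1 \<ge> t0" using T(1) unfolding T1_def by auto
    have ga: "g t \<le> - \<epsilon> * a t" if "t \<ge> T1" for t
    proof -
      have at: "a t < 0" using T(2)[of t] that unfolding T1_def by simp
      have "t \<ge> T2" using that unfolding T1_def by simp
      then have "\<bar>g t / a t - 0\<bar> < \<epsilon>" using T2[of t] unfolding dist_real_def by blast
      then have "- \<epsilon> < g t / a t" by linarith
      then have "(g t / a t) * a t \<le> (- \<epsilon>) * a t" using at by (intro mult_right_mono_neg) auto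
      then show ?thesis using at by simp
    qed
    show ?thesis
    proof (intro exI[of _ T1] conjI allI impI)
      show "T1 \<ge> T" by fact
      fix b assume b: "b \<ge> T1"
      show "u b \<le> exp I * (u T1 * exp (integral {T1..b} a) + \<epsilon>)"
      proof (cases "b = T1")
        case True
        have "1 \<le> exp I" using I0 by simp
        moreover have "0 \<le> u T1 + \<epsilon>" using unn[of T1] eps by simp
        ultimately have "1 * (u T1 + \<epsilon>) \<le> exp I * (u T1 + \<epsilon>)" by (rule mult_right_mono)
        then show ?thesis using True eps by simp
      next
        case False
        then have bT: "T1 < b" using b by simp
        define p where "p = (\<lambda>s. integral {T1..s} a)"
        define Dd where "Dd = (\<lambda>s. integral {T1..s} d)"
        define q where "q = (\<lambda>s. p s + Dd s)"
        define z where "z = (\<lambda>s. exp (- q s) * u s - \<epsilon> * exp (- p s))"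
        have bt0: "b + 1 \<ge> t0" using b T1t0 by simp
        obtain SA where SA: "finite SA" "continuous_on ({t0..b+1} - SA) A"
          using pcA bt0 unfolding piecewise_continuous_from_def by blast
        obtain SD where SD: "finite SD" "continuous_on ({t0..b+1} - SD) \<Delta>"
          using pcD bt0 unfolding piecewise_continuous_from_def by blast
        obtain SK where SK: "finite SK" "continuous_on ({t0..b+1} - SK) K"
          using pcK bt0 unfolding piecewise_continuous_from_def by blast
        obtain Sw where Sw: "finite Sw" "continuous_on (UNIV \<times> ({t0..b+1} - Sw)) (\<lambda>(y, t). \<omega> y t)"
          using pcw bt0 unfolding piecewise_continuous_state_time_def by blast
        define E where "E = SA \<union> SD \<union> SK \<union> Sw"
        have pc: "continuous_on {T1..b} p" unfolding p_def
          by (rule indefinite_integral_continuous_1[OF aint[OF T1t0]])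
        have Dc: "continuous_on {T1..b} Dd" unfolding Dd_def
          by (rule indefinite_integral_continuous_1[OF dint[OF T1t0]])
        have uc: "continuous_on {T1..b} u" unfolding u_def
          by (rule continuous_on_compose2[OF vn_continuous[OF norm] continuous_on_subset[OF xcont]]) (use T1t0 in auto)
        have zc: "continuous_on {T1..b} z" unfolding z_def q_def
          by (intro continuous_intros pc Dc uc)
        have zle: "z b \<le> z T1"
        proof (rule dini_mono[of E T1 b z])
          show "finite E" unfolding E_def using SA SD SK Sw by simp
          show "T1 \<le> b" using b by simp
          show "continuous_on {T1..b} z" by (rule zc)
          fix t assume t: "t \<in> {T1<..<b} - E"
          have tt0: "t0 < t" "t < b + 1" using t T1t0 by auto
          have tA: "t \<in> {t0<..<b+1} - SA" and tD: "t \<in> {t0<..<b+1} - SD" and tK: "t \<in> {t0<..<b+1} - SK"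
            and tw: "t \<in> {t0<..<b+1} - Sw" using t tt0 unfolding E_def by auto
          have cA: "isCont A t" by (rule pc_isCont[OF SA tA])
          have cD: "isCont \<Delta> t" by (rule pc_isCont[OF SD tD])
          have cK: "isCont K t" by (rule pc_isCont[OF SK tK])
          have cw: "isCont (\<lambda>(y, t). \<omega> y t) (x t, t)" by (rule pc2_isCont[OF Sw tw])
          have cx: "isCont x t"
          proof -
            have "continuous_on {t0<..} x" by (rule continuous_on_subset[OF xcont]) auto
            then show ?thesis using continuous_on_eq_continuous_at[OF open_greaterThan] tt0(1) by blast
          qed
          have cP: "isCont (\<lambda>s. (x s, s)) t" by (intro continuous_intros cx)
          have cwx: "isCont (\<lambda>s. \<omega> (x s) s) t"
            using continuous_at_compose[OF cP, of "\<lambda>(y, t). \<omega> y t"] cw by (simp add: o_def)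
          have cBK: "isCont (\<lambda>s. B ** K s) t" by (rule isCont_BK[OF cK])
          have cG: "isCont G t" unfolding G_def
            by (intro continuous_add isCont_mv cx cwx cBK cA cD)
          have xd: "(x has_vector_derivative G t) (at t)" by (rule x_deriv[OF solG tt0 cG])
          have Gt: "G t = (M t + \<Delta> t) *v x t + \<omega> (x t) t"
            unfolding G_def M_def by (simp add: algebra_simps)
          have wg: "N (\<omega> (x t) t) \<le> g t" using A3bd tt0 unfolding g_def by auto
          have Lu: "\<forall>\<^sub>F h in at_right 0. N (x (t+h)) \<le> N (x t) + h * ((log_norm N (M t) + log_norm N (\<Delta> t)) * N (x t) + g t + \<delta>)"
            if "\<delta> > 0" for \<delta>
            by (rule L_u[OF norm _ wg that]) (use xd Gt in simp)
          have cM: "isCont M t" unfolding M_def by (rule continuous_add[OF cA cBK])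
          have ca: "isCont a t" unfolding a_def by (rule log_norm_isCont[OF norm cM])
          have cd: "isCont d t" unfolding d_def by (intro continuous_intros log_norm_isCont[OF norm cD])
          have tb: "T1 < t" "t < b" using t by auto
          have dp: "(p has_real_derivative a t) (at t)" unfolding p_def
            by (rule int_deriv[OF aint[OF T1t0] tb ca])
          have dD: "(Dd has_real_derivative d t) (at t)" unfolding Dd_def
            by (rule int_deriv[OF dint[OF T1t0] tb cd])
          have dq: "(q has_real_derivative a t + d t) (at t)" unfolding q_def
            by (rule DERIV_add[OF dp dD])
          have pq: "p t \<le> q t" unfolding q_def Dd_def using Dge[OF T1t0, of t] by simp
          have at: "a t \<le> 0" using T(2)[of t] T1T tb by simp
          have c: "(a t + log_norm N (\<Delta> t)) * u t + g t \<le> (a t + d t) * u t - \<epsilon> * a t"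
          proof -
            have "log_norm N (\<Delta> t) * u t \<le> d t * u t" unfolding d_def using unn[of t] by (intro mult_right_mono) auto
            moreover have "g t \<le> - \<epsilon> * a t" using ga[of t] tb by simp
            ultimately show ?thesis by (simp add: algebra_simps)
          qed
          have du: "\<forall>\<^sub>F h in at_right 0. u (t+h) \<le> u t + h*(((a t + log_norm N (\<Delta> t)) * u t + g t) + \<delta>)"
            if "\<delta> > 0" for \<delta>
            using Lu[OF that] unfolding u_def a_def by simp
          from L_z[OF dp dq pq at less_imp_le[OF eps] c du]
          show "\<forall>\<delta>>0. \<forall>\<^sub>F h in at_right 0. z (t + h) \<le> z t + h * \<delta>" unfolding z_def by simp
        qed
        have p0: "p T1 = 0" "Dd T1 = 0" unfolding p_def Dd_def by simp_all
        define P where "P = exp (p b)"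
        define Q where "Q = exp (Dd b)"
        have P0: "P > 0" and Q0: "Q > 0" unfolding P_def Q_def by simp_all
        have e1: "exp (- q b) = 1 / (P * Q)"
        proof -
          have "exp (- q b) = inverse (exp (p b + Dd b))" unfolding q_def by (simp add: exp_minus[symmetric])
          then show ?thesis unfolding P_def Q_def by (simp add: exp_add divide_inverse)
        qed
        have e2: "exp (- p b) = 1 / P" unfolding P_def by (simp add: exp_minus divide_inverse)
        have zT: "z T1 = u T1 - \<epsilon>" using p0 unfolding z_def q_def by simp
        have zb: "z b = u b / (P * Q) - \<epsilon> / P" unfolding z_def using e1 e2 by simp
        have "(u b / (P * Q) - \<epsilon> / P) * (P * Q) \<le> (u T1 - \<epsilon>) * (P * Q)"
          using zle zT zb P0 Q0 by (intro mult_right_mono) auto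
        moreover have "(u b / (P * Q) - \<epsilon> / P) * (P * Q) = u b - \<epsilon> * Q" using P0 Q0 by (simp add: field_simps)
        ultimately have "u b \<le> P * Q * (u T1 - \<epsilon>) + \<epsilon> * Q" by (simp add: algebra_simps)
        also have "\<dots> \<le> Q * (u T1 * P + \<epsilon>)" using P0 Q0 eps by (simp add: algebra_simps)
        also have "\<dots> \<le> exp I * (u T1 * P + \<epsilon>)"
        proof (rule mult_right_mono)
          show "Q \<le> exp I" unfolding Q_def Dd_def using Dle[OF T1t0, of b] by simp
          show "0 \<le> u T1 * P + \<epsilon>" using unn[of T1] P0 eps by simp
        qed
        finally show ?thesis unfolding P_def p_def .
      qed
    qed
  qed
  show ?thesis
  proof (rule tendstoI)
    fix e :: real assume e: "e > 0"
    define \<epsilon> where "\<epsilon> = m * e / (4 * exp I)"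
    have eps: "\<epsilon> > 0" using e m by (simp add: \<epsilon>_def)
    obtain T1 where T1: "T1 \<ge> T" "\<And>t. t \<ge> T1 \<Longrightarrow> u t \<le> exp I * (u T1 * exp (integral {T1..t} a) + \<epsilon>)"
      using MC[OF eps] by blast
    define Z where "Z = ln (\<epsilon> / (u T1 + 1)) + integral {t0..T1} a"
    have "\<forall>\<^sub>F t in at_top. integral {t0..t} a \<le> Z" using A4' unfolding filterlim_at_bot by blast
    moreover have "\<forall>\<^sub>F t in at_top. t \<ge> T1" by (rule eventually_ge_at_top)
    ultimately show "\<forall>\<^sub>F t in at_top. dist (x t) 0 < e"
    proof eventually_elim
      case (elim t)
      have "integral {t0..T1} a + integral {T1..t} a = integral {t0..t} a"
        proof (rule Henstock_Kurzweil_Integration.integral_combine)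
          show "t0 \<le> T1" "T1 \<le> t" using T(1) T1(1) elim(2) by auto
          show "a integrable_on {t0..t}" using aint[of t0 t] by simp
        qed
      then have "integral {T1..t} a \<le> ln (\<epsilon> / (u T1 + 1))" using elim(1) unfolding Z_def by linarith
      moreover have pos: "\<epsilon> / (u T1 + 1) > 0" using eps unn[of T1] by simp
      ultimately have ex: "exp (integral {T1..t} a) \<le> \<epsilon> / (u T1 + 1)"
        by (metis exp_le_cancel_iff exp_ln)
      have "u T1 * exp (integral {T1..t} a) \<le> u T1 * (\<epsilon> / (u T1 + 1))"
        using ex unn[of T1] by (rule mult_left_mono)
      also have "\<dots> \<le> \<epsilon>" using unn[of T1] eps by (simp add: field_simps)
      finally have "u t \<le> exp I * (\<epsilon> + \<epsilon>)" using T1(2)[OF elim(2)] by (smt (verit) exp_gt_zero mult_left_mono)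
      also have "\<dots> = m * e / 2" unfolding \<epsilon>_def by (simp add: field_simps)
      finally have "u t \<le> m * e / 2" .
      then have "m * norm (x t) \<le> m * e / 2" using m(2)[of "x t"] unfolding u_def by linarith
      then have "norm (x t) \<le> e / 2" using m(1) by (simp add: field_simps)
      then show ?case using e by simp
    qed
  qed
qed


end
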